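(* Let $G=(V,E)$ be a finite simple graph with $|V|\ge1$ and minimum degree $\delta(G)\ge1$, whose vertices operate independently, vertex $v$ with probability $p_v$, and let $q_v=1-p_v$, $\mathbf{p}=(p_v)_{v\in V}$. Then \[ \operatorname{DRel}(G,\mathbf{p})=\sum_{\substack{J\subseteq V\\ |J|\le|V|-\delta(G)}}(-1)^{|J|}\prod_{v\in N_G[J]}q_v+(-1)^{|V|-\delta(G)+1}\binom{|V|-1}{\delta(G)-1}\prod_{v\in V}q_v. \]
   Context: $\operatorname{DRel}(G,\mathbf{p})$ is the probability that the set of operating vertices is a dominating set of $G$ (every vertex not in the set is adjacent to a vertex in it); edges never fail. $N_G[J]$ is the closed neighbourhood of $J$ (vertices in $J$ or adjacent to a vertex of $J$). $\delta(G)$ is the minimum degree of $G$. *)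

theory Defs
  imports Complex_Main
begin

definition simple_graph :: "'a set \<Rightarrow> ('a \<Rightarrow> 'a \<Rightarrow> bool) \<Rightarrow> bool" where
  "simple_graph V E \<longleftrightarrow> finite V \<and> (\<forall>u\<in>V. \<forall>v\<in>V. E u v \<longleftrightarrow> E v u) \<and> (\<forall>v\<in>V. \<not> E v v)"

definition degree :: "'a set \<Rightarrow> ('a \<Rightarrow> 'a \<Rightarrow> bool) \<Rightarrow> 'a \<Rightarrow> nat" where
  "degree V E v = card {u\<in>V. E v u}"

definition min_degree :: "'a set \<Rightarrow> ('a \<Rightarrow> 'a \<Rightarrow> bool) \<Rightarrow> nat" where
  "min_degree V E = Min (degree V E ` V)"

definition closed_nbhd :: "'a set \<Rightarrow> ('a \<Rightarrow> 'a \<Rightarrow> bool) \<Rightarrow> 'a set \<Rightarrow> 'a set" where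
  "closed_nbhd V E J = J \<union> {v\<in>V. \<exists>u\<in>J. E u v}"

definition dominating_set :: "'a set \<Rightarrow> ('a \<Rightarrow> 'a \<Rightarrow> bool) \<Rightarrow> 'a set \<Rightarrow> bool" where
  "dominating_set V E S \<longleftrightarrow> S \<subseteq> V \<and> (\<forall>v\<in>V - S. \<exists>u\<in>S. E v u)"

text \<open>Domination reliability: probability that the set of operating vertices
  (vertex v operates independently with probability p v) is dominating.\<close>
definition DRel :: "'a set \<Rightarrow> ('a \<Rightarrow> 'a \<Rightarrow> bool) \<Rightarrow> ('a \<Rightarrow> real) \<Rightarrow> real" where
  "DRel V E p = (\<Sum>S\<in>{S. S \<subseteq> V \<and> dominating_set V E S}.
      (\<Prod>v\<in>S. p v) * (\<Prod>v\<in>V - S. 1 - p v))"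

end

theory Submission
  imports Defs
begin

lemma alt_partial: "(\<Sum>k\<le>m. (-1)^k * real (Suc n choose k)) = (-1)^m * real (n choose m)"
  by (induction m) (auto simp: algebra_simps)

lemma alt_pow:
  assumes "finite U"
  shows "(\<Sum>J\<in>Pow U. (-1::real)^card J) = (if U={} then 1 else 0)"
proof -
  have "(\<Prod>x\<in>U. (-1::real) + 1) = (\<Sum>X\<in>Pow U. (\<Prod>x\<in>X. -1) * (\<Prod>x\<in>U-X. 1))"
    by (rule prod_add[OF assms])
  then have "(\<Sum>J\<in>Pow U. (-1::real)^card J) = 0 ^ card U" by (simp add: prod_constant)
  then show ?thesis using assms by (cases "U = {}") (auto simp: card_gt_0_iff)
qed

lemma expand:
  fixes p :: "'a \<Rightarrow> real"
  assumes "finite A" "B \<subseteq> A"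
  shows "(\<Prod>v\<in>B. 1 - p v) = (\<Sum>S\<in>Pow (A-B). (\<Prod>v\<in>S. p v) * (\<Prod>v\<in>A-S. 1 - p v))"
proof -
  have "(\<Prod>v\<in>A-B. p v + (1 - p v)) = (\<Sum>S\<in>Pow (A-B). (\<Prod>v\<in>S. p v) * (\<Prod>v\<in>(A-B)-S. 1 - p v))"
    by (rule prod_add) (use assms in auto)
  hence 1: "(\<Sum>S\<in>Pow (A-B). (\<Prod>v\<in>S. p v) * (\<Prod>v\<in>(A-B)-S. 1 - p v)) = 1" by simp
  have "(\<Prod>v\<in>B. 1 - p v) = (\<Prod>v\<in>B. 1 - p v) * (\<Sum>S\<in>Pow (A-B). (\<Prod>v\<in>S. p v) * (\<Prod>v\<in>(A-B)-S. 1 - p v))"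
    using 1 by simp
  also have "\<dots> = (\<Sum>S\<in>Pow (A-B). (\<Prod>v\<in>S. p v) * ((\<Prod>v\<in>(A-B)-S. 1 - p v) * (\<Prod>v\<in>B. 1 - p v)))"
    by (simp add: sum_distrib_left algebra_simps)
  also have "\<dots> = (\<Sum>S\<in>Pow (A-B). (\<Prod>v\<in>S. p v) * (\<Prod>v\<in>A-S. 1 - p v))"
  proof (rule sum.cong[OF refl])
    fix S assume "S \<in> Pow (A-B)"
    then have e: "A - S = ((A-B)-S) \<union> B" "((A-B)-S) \<inter> B = {}" using assms by auto
    have f: "finite B" "finite ((A-B)-S)" using assms finite_subset by auto
    show "(\<Prod>v\<in>S. p v) * ((\<Prod>v\<in>(A-B)-S. 1 - p v) * (\<Prod>v\<in>B. 1 - p v)) = (\<Prod>v\<in>S. p v) * (\<Prod>v\<in>A-S. 1 - p v)"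
      unfolding e(1) by (simp add: prod.union_disjoint[OF f(2) f(1) e(2)])
  qed
  finally show ?thesis .
qed

lemma drel_ie:
  fixes p :: "'a \<Rightarrow> real"
  assumes fin: "finite V" and sym: "\<forall>u\<in>V. \<forall>v\<in>V. E u v \<longleftrightarrow> E v u"
  shows "DRel V E p = (\<Sum>J\<in>Pow V. (-1)^card J * (\<Prod>v\<in>closed_nbhd V E J. 1 - p v))"
proof -
  let ?w = "\<lambda>S. (\<Prod>v\<in>S. p v) * (\<Prod>v\<in>V-S. 1 - p v)"
  let ?N = "closed_nbhd V E"
  define U where "U S = {v\<in>V. v\<notin>S \<and> (\<forall>w\<in>S. \<not> E v w)}" for S
  have nb: "?N J \<subseteq> V" if "J \<subseteq> V" for J using that by (auto simp: closed_nbhd_def)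
  have key: "(J \<subseteq> V \<and> S \<inter> ?N J = {}) \<longleftrightarrow> J \<subseteq> U S" if "S \<subseteq> V" for J S
    using that sym by (auto simp: closed_nbhd_def U_def; blast)
  have "(\<Sum>J\<in>Pow V. (-1)^card J * (\<Prod>v\<in>?N J. 1 - p v))
      = (\<Sum>J\<in>Pow V. \<Sum>S\<in>Pow V. if S \<inter> ?N J = {} then (-1)^card J * ?w S else 0)"
  proof (rule sum.cong[OF refl])
    fix J assume J: "J \<in> Pow V"
    have "(\<Prod>v\<in>?N J. 1 - p v) = (\<Sum>S\<in>Pow (V - ?N J). ?w S)"
      by (rule expand) (use fin nb J in auto)
    also have "Pow (V - ?N J) = {S\<in>Pow V. S \<inter> ?N J = {}}" by auto
    also have "(\<Sum>S\<in>{S\<in>Pow V. S \<inter> ?N J = {}}. ?w S) = (\<Sum>S\<in>Pow V. if S \<inter> ?N J = {} then ?w S else 0)"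
      by (rule sum.inter_filter) (use fin in auto)
    finally show "(-1)^card J * (\<Prod>v\<in>?N J. 1 - p v) = (\<Sum>S\<in>Pow V. if S \<inter> ?N J = {} then (-1)^card J * ?w S else 0)"
      by (simp add: sum_distrib_left if_distrib cong: if_cong)
  qed
  also have "\<dots> = (\<Sum>S\<in>Pow V. \<Sum>J\<in>Pow V. if S \<inter> ?N J = {} then (-1)^card J * ?w S else 0)"
    by (rule sum.swap)
  also have "\<dots> = (\<Sum>S\<in>Pow V. ?w S * (\<Sum>J\<in>Pow (U S). (-1)^card J))"
  proof (rule sum.cong[OF refl])
    fix S assume S: "S \<in> Pow V"
    have "(\<Sum>J\<in>Pow V. if S \<inter> ?N J = {} then (-1)^card J * ?w S else 0)
        = (\<Sum>J\<in>{J\<in>Pow V. S \<inter> ?N J = {}}. (-1)^card J * ?w S)"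
      by (rule sum.inter_filter[symmetric]) (use fin in auto)
    also have "{J\<in>Pow V. S \<inter> ?N J = {}} = Pow (U S)" using key[of S] S by auto
    finally show "(\<Sum>J\<in>Pow V. if S \<inter> ?N J = {} then (-1)^card J * ?w S else 0) = ?w S * (\<Sum>J\<in>Pow (U S). (-1)^card J)"
      by (simp add: sum_distrib_right mult.commute)
  qed
  also have "\<dots> = (\<Sum>S\<in>Pow V. if U S = {} then ?w S else 0)"
  proof (rule sum.cong[OF refl])
    fix S assume "S \<in> Pow V"
    have "finite (U S)" using fin by (simp add: U_def)
    then show "?w S * (\<Sum>J\<in>Pow (U S). (-1)^card J) = (if U S = {} then ?w S else 0)"
      by (simp add: alt_pow)
  qed
  also have "\<dots> = (\<Sum>S\<in>{S\<in>Pow V. U S = {}}. ?w S)"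
    by (rule sum.inter_filter[symmetric]) (use fin in auto)
  also have "{S\<in>Pow V. U S = {}} = {S. S \<subseteq> V \<and> dominating_set V E S}"
    by (auto simp: U_def dominating_set_def)
  finally show ?thesis by (simp add: DRel_def)
qed

theorem corollary2:
  fixes V :: "'a set" and E :: "'a \<Rightarrow> 'a \<Rightarrow> bool" and p :: "'a \<Rightarrow> real"
  assumes "simple_graph V E"
    and "card V \<ge> 1"
    and "min_degree V E \<ge> 1"
    and "\<forall>v\<in>V. 0 \<le> p v \<and> p v \<le> 1"
  shows "DRel V E p =
    (\<Sum>J\<in>{J. J \<subseteq> V \<and> card J \<le> card V - min_degree V E}.
        (-1) ^ card J * (\<Prod>v\<in>closed_nbhd V E J. 1 - p v))
    + (-1) ^ (card V - min_degree V E + 1) * real (card V - 1 choose (min_degree V E - 1))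
        * (\<Prod>v\<in>V. 1 - p v)"
proof -
  have fin: "finite V" and sym: "\<forall>u\<in>V. \<forall>v\<in>V. E u v \<longleftrightarrow> E v u" and irr: "\<forall>v\<in>V. \<not> E v v"
    using assms(1) by (auto simp: simple_graph_def)
  define n where "n = card V"
  define d where "d = min_degree V E"
  define m where "m = n - d"
  define q where "q = (\<Prod>v\<in>V. 1 - p v)"
  have Vne: "V \<noteq> {}" using assms(2) by auto
  have dle: "d \<le> card {w\<in>V. E u w}" if "u \<in> V" for u
    unfolding d_def min_degree_def degree_def using fin that by (intro Min_le) auto
  have "min_degree V E \<in> degree V E ` V"
    unfolding min_degree_def using fin Vne by (intro Min_in) auto
  then obtain v where v: "v \<in> V" "d = card {w\<in>V. E v w}"
    unfolding d_def degree_def by auto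
  have "{w\<in>V. E v w} \<subseteq> V - {v}" using v irr by auto
  hence "d \<le> card (V - {v})" using v fin by (metis (no_types, lifting) card_mono finite_Diff)
  hence dn: "d \<le> n - 1" using v fin by (simp add: n_def)
  have d1: "d \<ge> 1" using assms(3) by (simp add: d_def)
  have n1: "n \<ge> 1" using assms(2) by (simp add: n_def)
  have full: "closed_nbhd V E J = V" if J: "J \<subseteq> V" "\<not> card J \<le> m" for J
  proof (rule ccontr)
    assume "closed_nbhd V E J \<noteq> V"
    moreover have "closed_nbhd V E J \<subseteq> V" using J by (auto simp: closed_nbhd_def)
    ultimately obtain u where u: "u \<in> V" "u \<notin> closed_nbhd V E J" by blast
    have sub: "J \<subseteq> V - insert u {w\<in>V. E u w}"
      using u J sym by (auto simp: closed_nbhd_def)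
    have "card J \<le> card (V - insert u {w\<in>V. E u w})"
      using sub fin by (intro card_mono) auto
    also have "\<dots> = n - card (insert u {w\<in>V. E u w})"
      using fin u by (subst card_Diff_subset) (auto simp: n_def intro: finite_subset)
    also have "card (insert u {w\<in>V. E u w}) = Suc (card {w\<in>V. E u w})"
      using fin u irr by (subst card_insert_disjoint) auto
    finally have "card J \<le> n - Suc (card {w\<in>V. E u w})" .
    with dle[OF u(1)] have "card J \<le> m" unfolding m_def by linarith
    with J show False by simp
  qed
  let ?f = "\<lambda>J. (-1::real) ^ card J * (\<Prod>v\<in>closed_nbhd V E J. 1 - p v)"
  let ?A = "{J. J \<subseteq> V \<and> card J \<le> m}"
  let ?B = "{J. J \<subseteq> V \<and> \<not> card J \<le> m}"
  have PU: "Pow V = ?A \<union> ?B" "?A \<inter> ?B = {}" by auto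
  have finA: "finite ?A" "finite ?B" using fin by (auto intro: finite_subset[of _ "Pow V"])
  have sumPow: "sum g (Pow V) = sum g ?A + sum g ?B" for g :: "'a set \<Rightarrow> real"
    by (subst PU(1), rule sum.union_disjoint[OF finA PU(2)])
  have headc: "(\<Sum>J\<in>?A. (-1::real) ^ card J) = (-1)^m * real (n - 1 choose m)"
  proof -
    have "(\<Sum>J\<in>?A. (-1::real) ^ card J) = (\<Sum>k\<in>{..m}. \<Sum>J\<in>{J\<in>?A. card J = k}. (-1::real) ^ card J)"
      by (rule sum.group[symmetric]) (use finA in auto)
    also have "\<dots> = (\<Sum>k\<le>m. (-1)^k * real (Suc (n-1) choose k))"
    proof (rule sum.cong[OF refl])
      fix k assume "k \<in> {..m}"
      hence "{J\<in>?A. card J = k} = {J. J \<subseteq> V \<and> card J = k}" by auto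
      moreover have "card {J. J \<subseteq> V \<and> card J = k} = n choose k"
        using n_subsets[OF fin] by (simp add: n_def)
      ultimately show "(\<Sum>J\<in>{J\<in>?A. card J = k}. (-1::real) ^ card J) = (-1)^k * real (Suc (n-1) choose k)"
        using n1 by simp
    qed
    also have "\<dots> = (-1)^m * real (n - 1 choose m)" by (rule alt_partial)
    finally show ?thesis .
  qed
  have tailc: "(\<Sum>J\<in>?B. (-1::real) ^ card J) = (-1)^(m+1) * real (n - 1 choose (d - 1))"
  proof -
    have "(\<Sum>J\<in>Pow V. (-1::real) ^ card J) = 0" using alt_pow[OF fin] Vne by simp
    moreover have "(\<Sum>J\<in>Pow V. (-1::real) ^ card J) = (\<Sum>J\<in>?A. (-1::real) ^ card J) + (\<Sum>J\<in>?B. (-1::real) ^ card J)"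
      by (rule sumPow)
    ultimately have "(\<Sum>J\<in>?B. (-1::real) ^ card J) = - ((-1)^m * real (n - 1 choose m))"
      using headc by linarith
    moreover have "n - 1 choose m = n - 1 choose (d - 1)"
    proof -
      have "m \<le> n - 1" using d1 by (simp add: m_def)
      hence "n - 1 choose m = n - 1 choose (n - 1 - m)" by (rule binomial_symmetric)
      moreover have "n - 1 - m = d - 1" using dn d1 by (simp add: m_def)
      ultimately show ?thesis by simp
    qed
    ultimately show ?thesis by simp
  qed
  have tail: "sum ?f ?B = (-1)^(m+1) * real (n - 1 choose (d - 1)) * q"
  proof -
    have "sum ?f ?B = (\<Sum>J\<in>?B. (-1::real) ^ card J * q)"
      by (rule sum.cong[OF refl]) (simp add: full q_def)
    also have "\<dots> = (\<Sum>J\<in>?B. (-1::real) ^ card J) * q" by (simp add: sum_distrib_right)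
    finally show ?thesis using tailc by simp
  qed
  have "DRel V E p = sum ?f (Pow V)" by (rule drel_ie[OF fin sym])
  also have "\<dots> = sum ?f ?A + sum ?f ?B" by (rule sumPow)
  finally show ?thesis using tail by (simp add: m_def n_def d_def q_def)
qed

end
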